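(* Let $\Phi$ be a real $N\times d$ matrix satisfying the Restricted Isometry Condition with parameters $(2n,\varepsilon)$, $\varepsilon = 0.03/\sqrt{\log n}$, let $v \ne 0$ be $n$-sparse, $x = \Phi v$, and consider an iteration of ROMP run on $x$ with sparsity level $n$, with $I$ the index set and $r\ne0$ the residual at the start of that iteration, $u = \Phi^* r$, and $J_0$ the set chosen in the regularization step of that iteration. Let $v_0 = v|_{\mathrm{supp}(v)\setminus I}$ (equal to $v$ on $\mathrm{supp}(v)\setminus I$, $0$ elsewhere). Then $\|u|_{J_0}\|_2 \ge \frac{0.32}{\sqrt{\log n}}\,\|v_0\|_2$.
   Context: A vector is $n$-sparse if it has at most $n$ nonzero coordinates. $\Phi$ satisfies the Restricted Isometry Condition with parameters $(m,\varepsilon)$ if $(1-\varepsilon)\|w\|_2 \le \|\Phi w\|_2 \le (1+\varepsilon)\|w\|_2$ for all $m$-sparse $w$. $y|_T$ is the restriction of $y$ to coordinates in $T$. ROMP with input $x$ and sparsity level $n$: Initialize $I=\emptyset$, $r=x$. Repeat until $r=0$: (Identify) $u=\Phi^*r$, choose a set $J$ of the $n$ biggest coordinates of $u$ in magnitude, or all nonzero coordinates of $u$, whichever set is smaller; (Regularize) among subsets $J_0\subset J$ with $|u(i)|\le 2|u(j)|$ for all $i,j\in J_0$, choose one maximizing $\|u|_{J_0}\|_2$; (Update) $I\leftarrow I\cup J_0$, $y=\operatorname{argmin}_{z\in\mathbb{R}^I}\|x-\Phi z\|_2$, $r=x-\Phi y$. Output $I$. *)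

theory Defs
  imports "HOL-Analysis.Analysis"
begin

definition supp :: "real^'d \<Rightarrow> 'd set" where
  "supp w = {i. w $ i \<noteq> 0}"

definition sparse :: "nat \<Rightarrow> real^'d \<Rightarrow> bool" where
  "sparse m w \<longleftrightarrow> card (supp w) \<le> m"

definition RIC :: "real^'d^'N \<Rightarrow> nat \<Rightarrow> real \<Rightarrow> bool" where
  "RIC \<Phi> m \<epsilon> \<longleftrightarrow> (\<forall>w. sparse m w \<longrightarrow>
      (1 - \<epsilon>) * norm w \<le> norm (\<Phi> *v w) \<and> norm (\<Phi> *v w) \<le> (1 + \<epsilon>) * norm w)"

definition restrict_vec :: "real^'d \<Rightarrow> 'd set \<Rightarrow> real^'d" where
  "restrict_vec y T = (\<chi> i. if i \<in> T then y $ i else 0)"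

definition identify_ok :: "nat \<Rightarrow> real^'d \<Rightarrow> 'd set \<Rightarrow> bool" where
  "identify_ok n u J \<longleftrightarrow>
     (if card (supp u) \<le> n then J = supp u
      else card J = n \<and> (\<forall>i\<in>J. \<forall>j. j \<notin> J \<longrightarrow> \<bar>u $ j\<bar> \<le> \<bar>u $ i\<bar>))"

definition comparable :: "real^'d \<Rightarrow> 'd set \<Rightarrow> bool" where
  "comparable u J0 \<longleftrightarrow> (\<forall>i\<in>J0. \<forall>j\<in>J0. \<bar>u $ i\<bar> \<le> 2 * \<bar>u $ j\<bar>)"

definition regularize_ok :: "real^'d \<Rightarrow> 'd set \<Rightarrow> 'd set \<Rightarrow> bool" where
  "regularize_ok u J J0 \<longleftrightarrow> J0 \<subseteq> J \<and> comparable u J0 \<and>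
     (\<forall>K. K \<subseteq> J \<and> comparable u K \<longrightarrow> norm (restrict_vec u K) \<le> norm (restrict_vec u J0))"

definition lsq_ok :: "real^'d^'N \<Rightarrow> real^'N \<Rightarrow> 'd set \<Rightarrow> real^'d \<Rightarrow> bool" where
  "lsq_ok \<Phi> x I y \<longleftrightarrow> supp y \<subseteq> I \<and>
     (\<forall>z. supp z \<subseteq> I \<longrightarrow> norm (x - \<Phi> *v y) \<le> norm (x - \<Phi> *v z))"

inductive romp_state :: "real^'d^'N \<Rightarrow> real^'N \<Rightarrow> nat \<Rightarrow> 'd set \<Rightarrow> real^'N \<Rightarrow> bool"
  for \<Phi> x n where
  init: "romp_state \<Phi> x n {} x"
| step: "\<lbrakk> romp_state \<Phi> x n I r; r \<noteq> 0; u = transpose \<Phi> *v r;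
           identify_ok n u J; regularize_ok u J J0; lsq_ok \<Phi> x (I \<union> J0) y \<rbrakk>
         \<Longrightarrow> romp_state \<Phi> x n (I \<union> J0) (x - \<Phi> *v y)"

end

theory Submission
  imports Defs
begin


lemma inner_restrict: "inner (restrict_vec y T) w = (\<Sum>i\<in>T. y$i * w$i)"
proof -
  have "inner (restrict_vec y T) w = (\<Sum>i\<in>UNIV. if i \<in> T then y$i * w$i else 0)"
    unfolding inner_vec_def restrict_vec_def by (rule sum.cong) auto
  also have "\<dots> = (\<Sum>i\<in>UNIV \<inter> T. y$i * w$i)" by (rule sum.inter_restrict[symmetric]) simp
  finally show ?thesis by simp
qed

lemma norm_restrict_sq: "(norm (restrict_vec y T))^2 = (\<Sum>i\<in>T. (y$i)^2)"
  unfolding power2_norm_eq_inner inner_restrict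
  by (rule sum.cong) (auto simp: restrict_vec_def power2_eq_square)

lemma inner_transpose: "inner (transpose \<Phi> *v r) w = inner r (\<Phi> *v (w::real^'d))"
  by (simp add: dot_lmul_matrix)

lemma inner_supp: "inner a b = (\<Sum>i\<in>supp a. a$i * b$i)"
  unfolding inner_vec_def supp_def inner_real_def by (rule sum.mono_neutral_right) auto

lemma inner_disj: "supp a \<inter> supp b = {} \<Longrightarrow> inner a b = 0"
  unfolding inner_supp by (rule sum.neutral) (auto simp: supp_def)

lemma supp_add: "supp (a + b) \<subseteq> supp a \<union> supp b"
  by (auto simp: supp_def)
lemma supp_diff: "supp (a - b) \<subseteq> supp a \<union> supp b"
  by (auto simp: supp_def)
lemma supp_scale: "supp (c *\<^sub>R a) \<subseteq> supp a"
  by (auto simp: supp_def)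
lemma supp_restrict: "supp (restrict_vec a T) \<subseteq> T \<inter> supp a"
  by (auto simp: supp_def restrict_vec_def)

lemma RIC_sq:
  assumes "RIC \<Phi> m \<epsilon>" "0 \<le> \<epsilon>" "\<epsilon> \<le> 1" "card (supp w) \<le> m"
  shows "(1-\<epsilon>)^2 * (norm w)^2 \<le> (norm (\<Phi> *v w))^2"
    "(norm (\<Phi> *v w))^2 \<le> (1+\<epsilon>)^2 * (norm w)^2"
proof -
  have h: "(1 - \<epsilon>) * norm w \<le> norm (\<Phi> *v w)" "norm (\<Phi> *v w) \<le> (1 + \<epsilon>) * norm w"
    using assms unfolding RIC_def sparse_def by auto
  show "(1-\<epsilon>)^2 * (norm w)^2 \<le> (norm (\<Phi> *v w))^2"
    using power_mono[OF h(1), of 2] assms(3) by (simp add: power_mult_distrib)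
  show "(norm (\<Phi> *v w))^2 \<le> (1+\<epsilon>)^2 * (norm w)^2"
    using power_mono[OF h(2), of 2] by (simp add: power_mult_distrib)
qed

lemma polar:
  assumes R: "RIC \<Phi> m \<epsilon>" and e: "0 \<le> \<epsilon>" "\<epsilon> \<le> 1"
    and d: "supp a \<inter> supp b = {}" and c: "card (supp a \<union> supp b) \<le> m"
  shows "\<bar>inner (\<Phi> *v a) (\<Phi> *v b)\<bar> \<le> 2 * \<epsilon> * norm a * norm b"
proof -
  define \<alpha> where "\<alpha> = norm a"
  define \<beta> where "\<beta> = norm b"
  define p where "p = \<beta> *\<^sub>R a + \<alpha> *\<^sub>R b"
  define q where "q = \<beta> *\<^sub>R a - \<alpha> *\<^sub>R b"
  have ab: "inner a b = 0" using inner_disj[OF d] .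
  have aa: "inner a a = \<alpha>^2" "inner b b = \<beta>^2" by (simp_all add: \<alpha>_def \<beta>_def power2_norm_eq_inner)
  have np: "(norm p)^2 = 2 * \<alpha>^2 * \<beta>^2"
    unfolding p_def power2_norm_eq_inner
    by (simp add: inner_add_left inner_add_right ab inner_commute aa algebra_simps power2_eq_square)
  have nq: "(norm q)^2 = 2 * \<alpha>^2 * \<beta>^2"
    unfolding q_def power2_norm_eq_inner
    by (simp add: inner_diff_left inner_diff_right ab inner_commute aa algebra_simps power2_eq_square)
  have sp: "card (supp p) \<le> m"
    by (rule le_trans[OF card_mono c]) (auto simp: p_def supp_def)
  have sq: "card (supp q) \<le> m"
    by (rule le_trans[OF card_mono c]) (auto simp: q_def supp_def)
  have Pp: "\<Phi> *v p = \<beta> *\<^sub>R (\<Phi> *v a) + \<alpha> *\<^sub>R (\<Phi> *v b)"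
    by (simp add: p_def matrix_vector_right_distrib matrix_vector_mult_scaleR)
  have Pq: "\<Phi> *v q = \<beta> *\<^sub>R (\<Phi> *v a) - \<alpha> *\<^sub>R (\<Phi> *v b)"
    by (simp add: q_def matrix_vector_right_distrib matrix_vector_mult_scaleR matrix_vector_mult_diff_distrib)
  have key: "(norm (\<Phi> *v p))^2 - (norm (\<Phi> *v q))^2 = 4 * \<alpha> * \<beta> * inner (\<Phi> *v a) (\<Phi> *v b)"
    unfolding Pp Pq power2_norm_eq_inner
    by (simp add: inner_add_left inner_add_right inner_diff_left inner_diff_right inner_commute algebra_simps)
  have u1: "(norm (\<Phi> *v p))^2 \<le> (1+\<epsilon>)^2 * (2 * \<alpha>^2 * \<beta>^2)" using RIC_sq(2)[OF R e sp] unfolding np .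
  have l1: "(1-\<epsilon>)^2 * (2 * \<alpha>^2 * \<beta>^2) \<le> (norm (\<Phi> *v q))^2" using RIC_sq(1)[OF R e sq] unfolding nq .
  have u2: "(norm (\<Phi> *v q))^2 \<le> (1+\<epsilon>)^2 * (2 * \<alpha>^2 * \<beta>^2)" using RIC_sq(2)[OF R e sq] unfolding nq .
  have l2: "(1-\<epsilon>)^2 * (2 * \<alpha>^2 * \<beta>^2) \<le> (norm (\<Phi> *v p))^2" using RIC_sq(1)[OF R e sp] unfolding np .
  have dd: "(1+\<epsilon>)^2 * (2 * \<alpha>^2 * \<beta>^2) - (1-\<epsilon>)^2 * (2 * \<alpha>^2 * \<beta>^2) = 8 * \<epsilon> * \<alpha>^2 * \<beta>^2"
    by (simp add: power2_eq_square algebra_simps)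
  have b1: "(norm (\<Phi> *v p))^2 - (norm (\<Phi> *v q))^2 \<le> 8 * \<epsilon> * \<alpha>^2 * \<beta>^2"
    using u1 l1 dd by linarith
  have b2: "-(8 * \<epsilon> * \<alpha>^2 * \<beta>^2) \<le> (norm (\<Phi> *v p))^2 - (norm (\<Phi> *v q))^2"
    using u2 l2 dd by linarith
  show ?thesis
  proof (cases "\<alpha> * \<beta> = 0")
    case True
    then have "a = 0 \<or> b = 0" by (auto simp: \<alpha>_def \<beta>_def)
    then show ?thesis by auto
  next
    case False
    then have pos: "\<alpha> * \<beta> > 0" by (simp add: \<alpha>_def \<beta>_def)
    have "4 * (\<alpha> * \<beta>) * \<bar>inner (\<Phi> *v a) (\<Phi> *v b)\<bar> \<le> 4 * (\<alpha> * \<beta>) * (2 * \<epsilon> * \<alpha> * \<beta>)"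
      using b1 b2 key pos by (simp add: abs_le_iff algebra_simps power2_eq_square)
    then have "(\<alpha> * \<beta>) * \<bar>inner (\<Phi> *v a) (\<Phi> *v b)\<bar> \<le> (\<alpha> * \<beta>) * (2 * \<epsilon> * \<alpha> * \<beta>)" by linarith
    then have "\<bar>inner (\<Phi> *v a) (\<Phi> *v b)\<bar> \<le> 2 * \<epsilon> * \<alpha> * \<beta>" using pos mult_le_cancel_left_pos by blast
    then show ?thesis by (simp add: \<alpha>_def \<beta>_def)
  qed
qed



lemma inner_restrict_supp: "supp b \<subseteq> T \<Longrightarrow> inner a b = inner (restrict_vec a T) b"
  unfolding inner_vec_def restrict_vec_def
  by (rule sum.cong) (auto simp: supp_def)

lemma norm_restrict_le: "norm (restrict_vec y T) \<le> norm y"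
proof -
  have "(norm (restrict_vec y T))^2 = inner (restrict_vec y T) y"
    using norm_restrict_sq[of y T] by (simp add: inner_restrict power2_eq_square)
  also have "\<dots> \<le> norm (restrict_vec y T) * norm y" by (rule norm_cauchy_schwarz)
  finally have "norm (restrict_vec y T) * norm (restrict_vec y T) \<le> norm (restrict_vec y T) * norm y"
    by (simp add: power2_eq_square)
  then show ?thesis
    by (metis mult_le_cancel_left_pos norm_ge_zero order_le_less)
qed

lemma lsq_orth:
  assumes "lsq_ok \<Phi> x I y" "supp z \<subseteq> I"
  shows "inner (x - \<Phi> *v y) (\<Phi> *v z) = 0"
proof -
  define r where "r = x - \<Phi> *v y"
  define c where "c = inner r (\<Phi> *v z)"
  define d where "d = (norm (\<Phi> *v z))^2"
  define t where "t = c / (d + 1)"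
  have d0: "d \<ge> 0" by (simp add: d_def)
  have tc: "t * (d + 1) = c" using d0 by (simp add: t_def)
  have "supp (y + t *\<^sub>R z) \<subseteq> I" using supp_add[of y "t *\<^sub>R z"] supp_scale[of t z] assms unfolding lsq_ok_def by blast
  then have "norm r \<le> norm (x - \<Phi> *v (y + t *\<^sub>R z))" using assms(1) unfolding lsq_ok_def r_def by blast
  also have "x - \<Phi> *v (y + t *\<^sub>R z) = r - t *\<^sub>R (\<Phi> *v z)"
    by (simp add: r_def matrix_vector_right_distrib matrix_vector_mult_scaleR)
  finally have "(norm r)^2 \<le> (norm (r - t *\<^sub>R (\<Phi> *v z)))^2"
    by (simp add: power_mono)
  also have "\<dots> = (norm r)^2 - 2 * t * c + t^2 * d"
    unfolding power2_norm_eq_inner c_def d_def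
    by (simp add: inner_diff_left inner_diff_right inner_commute algebra_simps power2_eq_square)
  finally have "2 * t * c \<le> t^2 * d" by simp
  moreover have "2 * t * c = 2 * (t^2 * d) + 2 * t^2" by (simp add: tc[symmetric] power2_eq_square algebra_simps)
  moreover have "t^2 * d \<ge> 0" using d0 by simp
  ultimately have "t^2 \<le> 0" by linarith
  then have "t = 0" by simp
  then show ?thesis using tc by (simp add: c_def r_def)
qed

lemma supp_axis: "supp (axis i (1::real)) = {i}"
  by (auto simp: supp_def axis_def)

lemma u_zero:
  assumes "\<forall>z. supp z \<subseteq> I \<longrightarrow> inner r (\<Phi> *v z) = 0" "i \<in> I"
  shows "(transpose \<Phi> *v r) $ i = 0"
proof -
  have "(transpose \<Phi> *v r) $ i = inner (transpose \<Phi> *v r) (axis i 1)"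
    by (simp add: inner_axis)
  also have "\<dots> = inner r (\<Phi> *v axis i 1)" by (rule inner_transpose)
  also have "\<dots> = 0" using assms supp_axis[of i] by auto
  finally show ?thesis .
qed

lemma identify_props:
  assumes "identify_ok n u J"
  shows "J \<subseteq> supp u" "card J \<le> n"
proof -
  show "card J \<le> n" using assms unfolding identify_ok_def by (auto split: if_splits)
  show "J \<subseteq> supp u"
  proof (cases "card (supp u) \<le> n")
    case True then show ?thesis using assms unfolding identify_ok_def by auto
  next
    case False
    then have cJ: "card J = n" and dom: "\<forall>i\<in>J. \<forall>j. j \<notin> J \<longrightarrow> \<bar>u $ j\<bar> \<le> \<bar>u $ i\<bar>"
      using assms unfolding identify_ok_def by auto
    have "\<not> supp u \<subseteq> J"
    proof
      assume "supp u \<subseteq> J"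
      then have "card (supp u) \<le> card J" by (simp add: card_mono)
      then show False using False cJ by simp
    qed
    then obtain j where j: "j \<in> supp u" "j \<notin> J" by auto
    show ?thesis
    proof
      fix i assume "i \<in> J"
      then have "\<bar>u $ j\<bar> \<le> \<bar>u $ i\<bar>" using dom j by auto
      moreover have "\<bar>u $ j\<bar> > 0" using j by (simp add: supp_def)
      ultimately show "i \<in> supp u" by (auto simp: supp_def)
    qed
  qed
qed

lemma sum_sq_zero_out: "(\<Sum>i\<in>S. (u$i)^2) = (\<Sum>i\<in>S \<inter> supp u. (u$i)^2)"
  by (rule sum.mono_neutral_right) (auto simp: supp_def)

lemma identify_energy:
  assumes "identify_ok n u J" "card S \<le> n"
  shows "(\<Sum>i\<in>S. (u$i)^2) \<le> (\<Sum>i\<in>J. (u$i)^2)"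
proof (cases "card (supp u) \<le> n")
  case True
  then have J: "J = supp u" using assms unfolding identify_ok_def by auto
  have "(\<Sum>i\<in>S. (u$i)^2) = (\<Sum>i\<in>S \<inter> supp u. (u$i)^2)" by (rule sum_sq_zero_out)
  also have "\<dots> \<le> (\<Sum>i\<in>supp u. (u$i)^2)" by (rule sum_mono2) auto
  finally show ?thesis using J by simp
next
  case False
  then have cJ: "card J = n" and dom: "\<forall>i\<in>J. \<forall>j. j \<notin> J \<longrightarrow> \<bar>u $ j\<bar> \<le> \<bar>u $ i\<bar>"
    using assms unfolding identify_ok_def by auto
  have fin: "finite A" for A :: "'a set" by simp
  have sS: "(\<Sum>i\<in>S. (u$i)^2) = (\<Sum>i\<in>S \<inter> J. (u$i)^2) + (\<Sum>i\<in>S - J. (u$i)^2)"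
    by (metis Diff_eq fin sum.Int_Diff)
  have sJ: "(\<Sum>i\<in>J. (u$i)^2) = (\<Sum>i\<in>S \<inter> J. (u$i)^2) + (\<Sum>i\<in>J - S. (u$i)^2)"
    by (metis inf_commute fin sum.Int_Diff)
  have cS: "card S = card (S \<inter> J) + card (S - J)" by (metis card_Int_Diff fin Diff_eq)
  have cJ': "card J = card (S \<inter> J) + card (J - S)" by (metis card_Int_Diff fin inf_commute)
  have cc: "card (S - J) \<le> card (J - S)" using cS cJ' cJ assms(2) by linarith
  show ?thesis
  proof (cases "S - J = {}")
    case True
    have "(\<Sum>i\<in>S - J. (u$i)^2) = 0" by (simp only: True sum.empty)
    moreover have "(\<Sum>i\<in>J - S. (u$i)^2) \<ge> 0" by (rule sum_nonneg) simp
    ultimately show ?thesis using sS sJ by linarith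
  next
    case False
    then have "card (S - J) > 0" by (simp add: card_gt_0_iff)
    then have ne: "J - S \<noteq> {}"
    proof -
      assume h: "card (S - J) > 0"
      show ?thesis
      proof
        assume "J - S = {}"
        then have "card (J - S) = 0" by simp
        with cc h show False by linarith
      qed
    qed
    define m where "m = Min ((\<lambda>i. (u$i)^2) ` (J - S))"
    have m1: "(u$i)^2 \<ge> m" if "i \<in> J - S" for i
      unfolding m_def using that by (simp add: Min_le)
    have m2: "(u$j)^2 \<le> m" if "j \<in> S - J" for j
    proof -
      have "m \<in> (\<lambda>i. (u$i)^2) ` (J - S)" unfolding m_def using ne by (intro Min_in) auto
      then obtain i where i: "i \<in> J - S" "m = (u$i)^2" by blast
      have "\<bar>u$j\<bar> \<le> \<bar>u$i\<bar>" using dom that i by auto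
      then have "\<bar>u$j\<bar>^2 \<le> \<bar>u$i\<bar>^2" by (rule power_mono) simp
      then show ?thesis using i by simp
    qed
    have "(\<Sum>i\<in>S - J. (u$i)^2) \<le> of_nat (card (S - J)) * m"
      using sum_bounded_above[of "S - J" "\<lambda>i. (u$i)^2" m] m2 by auto
    also have "\<dots> \<le> of_nat (card (J - S)) * m"
    proof -
      have "m \<ge> 0" using m2 False by (meson all_not_in_conv order.trans zero_le_power2)
      then show ?thesis using cc by (simp add: mult_right_mono)
    qed
    also have "\<dots> \<le> (\<Sum>i\<in>J - S. (u$i)^2)"
      using sum_bounded_below[of "J - S" m "\<lambda>i. (u$i)^2"] m1 by auto
    finally show ?thesis using sS sJ by linarith
  qed
qed



lemma comparable_energy:
  assumes "regularize_ok u J J0" "K \<subseteq> J" "comparable u K"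
  shows "(\<Sum>i\<in>K. (u$i)^2) \<le> (\<Sum>i\<in>J0. (u$i)^2)"
proof -
  have "norm (restrict_vec u K) \<le> norm (restrict_vec u J0)" using assms unfolding regularize_ok_def by blast
  then have "(norm (restrict_vec u K))^2 \<le> (norm (restrict_vec u J0))^2" by (simp add: power_mono)
  then show ?thesis by (simp add: norm_restrict_sq)
qed

lemma regularize_energy:
  assumes reg: "regularize_ok u J J0" and cJ: "card J \<le> n" and nK: "n \<le> 2^K"
  shows "(\<Sum>i\<in>J. (u$i)^2) \<le> (real K + 1) * (\<Sum>i\<in>J0. (u$i)^2)"
proof -
  define E where "E = (\<Sum>i\<in>J0. (u$i)^2)"
  have E0: "E \<ge> 0" unfolding E_def by (rule sum_nonneg) simp
  show ?thesis
  proof (cases "J = {}")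
    case True then show ?thesis using E0 by (simp add: E_def)
  next
    case False
    define M where "M = Max ((\<lambda>i. \<bar>u$i\<bar>) ` J)"
    have "M \<in> (\<lambda>i. \<bar>u$i\<bar>) ` J" unfolding M_def using False by (intro Max_in) auto
    then obtain i0 where i0: "i0 \<in> J" "M = \<bar>u$i0\<bar>" by blast
    have Mge: "\<bar>u$i\<bar> \<le> M" if "i \<in> J" for i unfolding M_def using that by simp
    have M0: "M \<ge> 0" using i0 by simp
    have "comparable u {i0}" by (simp add: comparable_def)
    then have "(\<Sum>i\<in>{i0}. (u$i)^2) \<le> E" unfolding E_def using comparable_energy[OF reg] i0 by blast
    then have ME: "M^2 \<le> E" using i0 by simp
    define B where "B k = {i\<in>J. M / 2^k < \<bar>u$i\<bar>}" for k :: nat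
    have Bk: "(\<Sum>i\<in>B k. (u$i)^2) \<le> real k * E" for k
    proof (induction k)
      case 0
      have "B 0 = {}" unfolding B_def using Mge by force
      then show ?case by simp
    next
      case (Suc k)
      define A where "A = {i\<in>J. M / 2^(Suc k) < \<bar>u$i\<bar> \<and> \<bar>u$i\<bar> \<le> M / 2^k}"
      have half: "M / 2^(Suc k) \<le> M / 2^k" by (rule divide_left_mono) (use M0 in auto)
      have BU: "B (Suc k) = B k \<union> A" unfolding B_def A_def using half by auto
      have disj: "B k \<inter> A = {}" unfolding B_def A_def by auto
      have "comparable u A" unfolding comparable_def
      proof (intro ballI)
        fix i j assume "i \<in> A" "j \<in> A"
        then have "\<bar>u$i\<bar> \<le> M / 2^k" "M / 2^(Suc k) < \<bar>u$j\<bar>" unfolding A_def by auto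
        moreover have "M / 2^k = 2 * (M / 2^(Suc k))" by (simp add: field_simps)
        ultimately show "\<bar>u$i\<bar> \<le> 2 * \<bar>u$j\<bar>" by linarith
      qed
      moreover have "A \<subseteq> J" unfolding A_def by blast
      ultimately have AE: "(\<Sum>i\<in>A. (u$i)^2) \<le> E" unfolding E_def
        using comparable_energy[OF reg] by blast
      have "(\<Sum>i\<in>B (Suc k). (u$i)^2) = (\<Sum>i\<in>B k. (u$i)^2) + (\<Sum>i\<in>A. (u$i)^2)"
        unfolding BU by (rule sum.union_disjoint) (auto simp: disj)
      moreover have "real (Suc k) * E = real k * E + E" by (simp add: algebra_simps)
      ultimately show ?case using Suc AE by linarith
    qed
    have BJ: "B K \<subseteq> J" unfolding B_def by auto
    have rest: "(\<Sum>i\<in>J - B K. (u$i)^2) \<le> M^2"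
    proof -
      have "(\<Sum>i\<in>J - B K. (u$i)^2) \<le> of_nat (card (J - B K)) * (M / 2^K)^2"
      proof (rule sum_bounded_above)
        fix i assume "i \<in> J - B K"
        then have "\<bar>u$i\<bar> \<le> M / 2^K" unfolding B_def by auto
        then have "\<bar>u$i\<bar>^2 \<le> (M / 2^K)^2" by (rule power_mono) simp
        then show "(u$i)^2 \<le> (M / 2^K)^2" by simp
      qed
      also have "\<dots> \<le> real n * (M / 2^K)^2"
      proof -
        have "card (J - B K) \<le> n" using cJ card_mono[of J "J - B K"] by auto
        then show ?thesis by (simp add: mult_right_mono)
      qed
      also have "\<dots> = (real n / (2^K)^2) * M^2" by (simp add: power_divide)
      also have "\<dots> \<le> 1 * M^2"
      proof (rule mult_right_mono)
        have "real n \<le> real (2^K)" using nK by (simp only: of_nat_le_iff)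
        also have "real (2^K) = (2::real)^K" by simp
        also have "(2::real)^K \<le> (2^K)^2" by (simp add: power2_eq_square)
        finally show "real n / (2^K)^2 \<le> 1" by simp
      qed simp
      finally show ?thesis by simp
    qed
    have "(\<Sum>i\<in>J. (u$i)^2) = (\<Sum>i\<in>B K. (u$i)^2) + (\<Sum>i\<in>J - B K. (u$i)^2)"
      using sum.subset_diff[OF BJ, of "\<lambda>i. (u$i)^2"] by simp
    also have "\<dots> \<le> real K * E + E" using Bk[of K] rest ME by linarith
    finally show ?thesis by (simp add: E_def algebra_simps)
  qed
qed

lemma comparable_split:
  assumes c: "comparable u J0" and L: "\<Lambda> \<subseteq> J0" and cc: "card (J0 - \<Lambda>) < card \<Lambda>"
  shows "(\<Sum>i\<in>J0. (u$i)^2) \<le> 5 * (\<Sum>i\<in>\<Lambda>. (u$i)^2)"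
proof -
  have ne: "\<Lambda> \<noteq> {}" using cc by auto
  define m where "m = Min ((\<lambda>i. (u$i)^2) ` \<Lambda>)"
  have "m \<in> (\<lambda>i. (u$i)^2) ` \<Lambda>" unfolding m_def using ne by (intro Min_in) auto
  then obtain i1 where i1: "i1 \<in> \<Lambda>" "m = (u$i1)^2" by blast
  have m1: "m \<le> (u$i)^2" if "i \<in> \<Lambda>" for i unfolding m_def using that by simp
  have m0: "m \<ge> 0" using i1 by simp
  have "(\<Sum>i\<in>J0 - \<Lambda>. (u$i)^2) \<le> of_nat (card (J0 - \<Lambda>)) * (4 * m)"
  proof (rule sum_bounded_above)
    fix j assume "j \<in> J0 - \<Lambda>"
    then have "\<bar>u$j\<bar> \<le> 2 * \<bar>u$i1\<bar>" using c i1 L unfolding comparable_def by auto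
    then have "\<bar>u$j\<bar>^2 \<le> (2 * \<bar>u$i1\<bar>)^2" by (rule power_mono) simp
    then show "(u$j)^2 \<le> 4 * m" using i1 by (simp add: power_mult_distrib)
  qed
  also have "\<dots> \<le> of_nat (card \<Lambda>) * (4 * m)" using cc m0 by (simp add: mult_right_mono)
  also have "\<dots> = 4 * (of_nat (card \<Lambda>) * m)" by simp
  also have "of_nat (card \<Lambda>) * m \<le> (\<Sum>i\<in>\<Lambda>. (u$i)^2)"
    using sum_bounded_below[of \<Lambda> m "\<lambda>i. (u$i)^2"] m1 by auto
  finally have "(\<Sum>i\<in>J0 - \<Lambda>. (u$i)^2) \<le> 4 * (\<Sum>i\<in>\<Lambda>. (u$i)^2)" by simp
  moreover have "(\<Sum>i\<in>J0. (u$i)^2) = (\<Sum>i\<in>\<Lambda>. (u$i)^2) + (\<Sum>i\<in>J0 - \<Lambda>. (u$i)^2)"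
    using L by (metis finite sum.subset_diff add.commute)
  ultimately show ?thesis by linarith
qed

lemma ln2_ge: "ln (2::real) \<ge> 1/2"
proof -
  have "exp (1/2::real)^2 = exp 1" by (simp add: exp_double[symmetric] power2_eq_square exp_add[symmetric])
  also have "\<dots> < 272/100" by (rule e_less_272)
  finally have "exp (1/2::real)^2 < 2^2" by simp
  then have "exp (1/2::real) < 2" by (rule power2_less_imp_less) simp
  then have "ln (exp (1/2::real)) < ln 2" by (simp add: ln_less_cancel_iff del: ln_exp)
  then show ?thesis by simp
qed

lemma choose_K:
  assumes "n \<ge> (1::nat)"
  shows "\<exists>K. n \<le> 2^K \<and> real K \<le> 2 * ln (real n) + 1"
proof -
  define K where "K = (LEAST K. n \<le> 2^K)"
  have ex: "n \<le> 2^n" using less_exp[of n] by simp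
  have nK: "n \<le> 2^K" unfolding K_def by (rule LeastI[of _ n]) (rule ex)
  have lnn: "ln (real n) \<ge> 0" using assms by simp
  show ?thesis
  proof (cases K)
    case 0
    then have "n \<le> 2^0" using nK by simp
    then show ?thesis using lnn by (intro exI[of _ 0]) simp
  next
    case (Suc k)
    have "k < K" using Suc by simp
    then have "\<not> n \<le> 2^k" unfolding K_def by (rule not_less_Least)
    then have "(2::real)^k < real n" by (metis not_le of_nat_less_iff of_nat_numeral of_nat_power)
    then have "ln ((2::real)^k) < ln (real n)" by (simp add: ln_less_cancel_iff)
    then have "real k * ln 2 < ln (real n)" by (simp add: ln_realpow)
    moreover have "real k * (1/2) \<le> real k * ln 2" using mult_left_mono[OF ln2_ge, of "real k"] by simp
    ultimately have "real k \<le> 2 * ln (real n)" by linarith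
    then show ?thesis using nK Suc by (intro exI[of _ K]) simp
  qed
qed



lemma core:
  fixes \<Phi> :: "real^'d^'N" and v y :: "real^'d" and x r :: "real^'N" and I :: "'d set"
  assumes R: "RIC \<Phi> (2*n) \<epsilon>" and e: "0 \<le> \<epsilon>" "\<epsilon> \<le> 1/2"
    and sv: "card (supp v) \<le> n" and xv: "x = \<Phi> *v v"
    and yI: "supp y \<subseteq> I" and rr: "r = x - \<Phi> *v y"
    and orth: "\<forall>z. supp z \<subseteq> I \<longrightarrow> inner r (\<Phi> *v z) = 0"
    and cI: "card (supp v \<union> I) \<le> 2*n"
  shows "(1-\<epsilon>)^2 * norm (restrict_vec v (supp v - I)) \<le> norm (restrict_vec (transpose \<Phi> *v r) (supp v - I))"
    and "\<Lambda> \<inter> supp v = {} \<Longrightarrow> card \<Lambda> \<le> n \<Longrightarrow>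
         (1-\<epsilon>) * norm (restrict_vec (transpose \<Phi> *v r) \<Lambda>) \<le> 4*\<epsilon>*norm (restrict_vec v (supp v - I))"
proof -
  have e1: "\<epsilon> \<le> 1" using e by simp
  define S where "S = supp v - I"
  define v0 where "v0 = restrict_vec v S"
  define w where "w = v - y"
  define z where "z = v0 - w"
  define u where "u = transpose \<Phi> *v r"
  have yz: "y$i = 0" if "i \<notin> I" for i using yI that by (auto simp: supp_def)
  have Pw: "\<Phi> *v w = r" by (simp add: w_def rr xv matrix_vector_mult_diff_distrib)
  have zI: "supp z \<subseteq> I"
  proof
    fix i assume "i \<in> supp z"
    show "i \<in> I"
    proof (rule ccontr)
      assume "i \<notin> I"
      then have "z$i = 0" using yz[of i] by (auto simp: z_def w_def v0_def restrict_vec_def S_def supp_def)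
      then show False using \<open>i \<in> supp z\<close> by (simp add: supp_def)
    qed
  qed
  have v0S: "supp v0 \<subseteq> S" using supp_restrict[of v S] by (auto simp: v0_def)
  have Sv: "S \<subseteq> supp v" by (auto simp: S_def)
  have SI: "S \<inter> I = {}" by (auto simp: S_def)
  have w_eq: "w = v0 - z" by (simp add: z_def)
  have rz: "r = \<Phi> *v v0 - \<Phi> *v z" using Pw w_eq by (simp add: matrix_vector_mult_diff_distrib)
  have orz: "inner r (\<Phi> *v z) = 0" using orth zI by blast
  have disj: "supp v0 \<inter> supp z = {}" using v0S zI SI by blast
  have cvz: "card (supp v0 \<union> supp z) \<le> 2*n"
    by (rule le_trans[OF card_mono cI]) (use v0S zI Sv in auto)
  have cz: "card (supp z) \<le> 2*n"
    by (rule le_trans[OF card_mono cI]) (use zI in auto)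
  have cw: "card (supp w) \<le> 2*n"
  proof (rule le_trans[OF card_mono cI])
    show "supp w \<subseteq> supp v \<union> I" using supp_diff[of v y] yI unfolding w_def by blast
  qed simp
  have v0w: "v0 = restrict_vec w S"
    unfolding v0_def w_def restrict_vec_def by (auto simp: vec_eq_iff S_def yz)
  have nv0w: "norm v0 \<le> norm w" using norm_restrict_le[of w S] v0w by simp
  have Pz: "(1-\<epsilon>) * norm (\<Phi> *v z) \<le> 2*\<epsilon>*norm v0"
  proof -
    have "inner (\<Phi> *v v0) (\<Phi> *v z) - inner (\<Phi> *v z) (\<Phi> *v z) = 0"
      using orz unfolding rz by (simp add: inner_diff_left)
    then have "(norm (\<Phi> *v z))^2 = inner (\<Phi> *v v0) (\<Phi> *v z)" by (simp add: power2_norm_eq_inner)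
    also have "\<dots> \<le> 2*\<epsilon>*norm v0*norm z" using polar[OF R e(1) e1 disj cvz] by linarith
    finally have h1: "(norm (\<Phi> *v z))^2 \<le> 2*\<epsilon>*norm v0*norm z" .
    have h2: "(1-\<epsilon>) * norm z \<le> norm (\<Phi> *v z)" using R cz unfolding RIC_def sparse_def by blast
    have "(1-\<epsilon>) * (norm (\<Phi> *v z))^2 \<le> (1-\<epsilon>) * (2*\<epsilon>*norm v0*norm z)"
      using h1 e1 by (simp add: mult_left_mono)
    also have "\<dots> = (2*\<epsilon>*norm v0) * ((1-\<epsilon>) * norm z)" by (simp add: algebra_simps)
    also have "\<dots> \<le> (2*\<epsilon>*norm v0) * norm (\<Phi> *v z)" using h2 e by (simp add: mult_left_mono)
    finally have h3: "norm (\<Phi> *v z) * ((1-\<epsilon>) * norm (\<Phi> *v z)) \<le> norm (\<Phi> *v z) * (2*\<epsilon>*norm v0)"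
      by (simp add: power2_eq_square algebra_simps)
    show ?thesis
    proof (cases "norm (\<Phi> *v z) = 0")
      case True then show ?thesis using e by simp
    next
      case False
      then have "norm (\<Phi> *v z) > 0" by simp
      then show ?thesis using h3 mult_le_cancel_left_pos by blast
    qed
  qed
  show "(1-\<epsilon>)^2 * norm (restrict_vec v (supp v - I)) \<le> norm (restrict_vec (transpose \<Phi> *v r) (supp v - I))"
  proof -
    have "inner u v0 = inner r (\<Phi> *v v0)" unfolding u_def by (rule inner_transpose)
    also have "\<Phi> *v v0 = r + \<Phi> *v z" using rz by simp
    also have "inner r (r + \<Phi> *v z) = (norm r)^2" using orz by (simp add: inner_add_right power2_norm_eq_inner)
    finally have i1: "inner u v0 = (norm r)^2" .
    have "inner u v0 = inner (restrict_vec u S) v0" using v0S by (rule inner_restrict_supp)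
    also have "\<dots> \<le> norm (restrict_vec u S) * norm v0" by (rule norm_cauchy_schwarz)
    finally have i2: "(norm r)^2 \<le> norm (restrict_vec u S) * norm v0" using i1 by simp
    have "(1-\<epsilon>)^2 * (norm w)^2 \<le> (norm r)^2" using RIC_sq(1)[OF R e(1) e1 cw] Pw by simp
    moreover have "(1-\<epsilon>)^2 * (norm v0)^2 \<le> (1-\<epsilon>)^2 * (norm w)^2"
      using nv0w by (simp add: mult_left_mono power_mono)
    ultimately have "norm v0 * ((1-\<epsilon>)^2 * norm v0) \<le> norm v0 * norm (restrict_vec u S)"
      using i2 by (simp add: power2_eq_square algebra_simps)
    then have "(1-\<epsilon>)^2 * norm v0 \<le> norm (restrict_vec u S)"
    proof (cases "norm v0 = 0")
      case True then show ?thesis by simp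
    next
      case False
      then have "norm v0 > 0" by simp
      then show ?thesis using \<open>norm v0 * ((1-\<epsilon>)^2 * norm v0) \<le> norm v0 * norm (restrict_vec u S)\<close>
        mult_le_cancel_left_pos by blast
    qed
    then show ?thesis by (simp add: v0_def S_def u_def)
  qed
  assume L1: "\<Lambda> \<inter> supp v = {}" and L2: "card \<Lambda> \<le> n"
  define b where "b = restrict_vec u \<Lambda>"
  have bL: "supp b \<subseteq> \<Lambda>" using supp_restrict[of u \<Lambda>] by (auto simp: b_def)
  have nb: "(norm b)^2 = inner u b"
    using norm_restrict_sq[of u \<Lambda>] by (simp add: b_def inner_commute[of u] inner_restrict power2_eq_square)
  have "inner u b = inner r (\<Phi> *v b)" unfolding u_def by (rule inner_transpose)
  also have "\<dots> = inner (\<Phi> *v v0) (\<Phi> *v b) - inner (\<Phi> *v z) (\<Phi> *v b)" by (simp add: rz inner_diff_left)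
  finally have ib: "(norm b)^2 = inner (\<Phi> *v v0) (\<Phi> *v b) - inner (\<Phi> *v z) (\<Phi> *v b)" using nb by simp
  have disj2: "supp v0 \<inter> supp b = {}" using v0S Sv bL L1 by blast
  have cvb: "card (supp v0 \<union> supp b) \<le> 2*n"
  proof -
    have "card (supp v0 \<union> supp b) \<le> card (supp v0) + card (supp b)" by (rule card_Un_le)
    also have "card (supp v0) \<le> card (supp v)" using v0S Sv by (intro card_mono) auto
    also have "card (supp b) \<le> card \<Lambda>" using bL by (intro card_mono) auto
    finally show ?thesis using sv L2 by linarith
  qed
  have p1: "\<bar>inner (\<Phi> *v v0) (\<Phi> *v b)\<bar> \<le> 2*\<epsilon>*norm v0*norm b" using polar[OF R e(1) e1 disj2 cvb] .
  have cb: "card (supp b) \<le> 2*n"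
  proof -
    have "card (supp b) \<le> card \<Lambda>" using bL by (intro card_mono) auto
    then show ?thesis using L2 by linarith
  qed
  have Pb: "norm (\<Phi> *v b) \<le> (1+\<epsilon>) * norm b" using R cb unfolding RIC_def sparse_def by blast
  have p2: "\<bar>inner (\<Phi> *v z) (\<Phi> *v b)\<bar> \<le> norm (\<Phi> *v z) * norm (\<Phi> *v b)" by (rule Cauchy_Schwarz_ineq2)
  have p3: "norm (\<Phi> *v z) * norm (\<Phi> *v b) \<le> (1+\<epsilon>) * norm b * norm (\<Phi> *v z)"
    using mult_left_mono[OF Pb norm_ge_zero[of "\<Phi> *v z"]] by (simp add: algebra_simps)
  have B2: "(norm b)^2 \<le> 2*\<epsilon>*norm v0*norm b + (1+\<epsilon>) * norm b * norm (\<Phi> *v z)"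
    using ib p1 p2 p3 by linarith
  have "(1-\<epsilon>) * (norm b)^2 \<le> (1-\<epsilon>) * (2*\<epsilon>*norm v0*norm b + (1+\<epsilon>) * norm b * norm (\<Phi> *v z))"
    using B2 e1 by (simp add: mult_left_mono)
  also have "\<dots> = (1-\<epsilon>)*(2*\<epsilon>*norm v0*norm b) + ((1+\<epsilon>) * norm b) * ((1-\<epsilon>) * norm (\<Phi> *v z))"
    by (simp add: algebra_simps)
  also have "((1+\<epsilon>) * norm b) * ((1-\<epsilon>) * norm (\<Phi> *v z)) \<le> ((1+\<epsilon>) * norm b) * (2*\<epsilon>*norm v0)"
    using Pz e by (simp add: mult_left_mono)
  finally have "(1-\<epsilon>) * (norm b)^2 \<le> (1-\<epsilon>)*(2*\<epsilon>*norm v0*norm b) + ((1+\<epsilon>) * norm b) * (2*\<epsilon>*norm v0)"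
    by simp
  also have "\<dots> = norm b * (4*\<epsilon>*norm v0)" by (simp add: algebra_simps)
  finally have h: "norm b * ((1-\<epsilon>) * norm b) \<le> norm b * (4*\<epsilon>*norm v0)"
    by (simp add: power2_eq_square algebra_simps)
  have "(1-\<epsilon>) * norm b \<le> 4*\<epsilon>*norm v0"
  proof (cases "norm b = 0")
    case True then show ?thesis using e by simp
  next
    case False
    then have "norm b > 0" by simp
    then show ?thesis using h mult_le_cancel_left_pos by blast
  qed
  then show "(1-\<epsilon>) * norm (restrict_vec (transpose \<Phi> *v r) \<Lambda>) \<le> 4*\<epsilon>*norm (restrict_vec v (supp v - I))"
    by (simp add: b_def u_def v0_def S_def)
qed



lemma eps_facts:
  assumes "n \<ge> (2::nat)"
  shows "ln (real n) \<ge> 1/2" "sqrt (ln (real n)) \<ge> 7/10" "(sqrt (ln (real n)))^2 = ln (real n)"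
    "0 \<le> 0.03 / sqrt (ln (real n))" "0.03 / sqrt (ln (real n)) \<le> 3/70"
    "ln (real n) * (0.03 / sqrt (ln (real n)))^2 = 9/10000"
proof -
  have "ln (2::real) \<le> ln (real n)" using assms by (simp add: ln_le_cancel_iff)
  then show L: "ln (real n) \<ge> 1/2" using ln2_ge by linarith
  have "(7/10)^2 \<le> ln (real n)" using L by (simp add: power2_eq_square)
  then show s: "sqrt (ln (real n)) \<ge> 7/10" by (rule real_le_rsqrt)
  show s2: "(sqrt (ln (real n)))^2 = ln (real n)" using L by simp
  show "0 \<le> 0.03 / sqrt (ln (real n))" using L by simp
  show "0.03 / sqrt (ln (real n)) \<le> 3/70"
    using s L by (simp add: divide_le_eq)
  show "ln (real n) * (0.03 / sqrt (ln (real n)))^2 = 9/10000"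
    using s2 L by (simp add: power_divide)
qed

lemma card_cI:
  fixes I :: "'d::finite set" and v :: "real^'d"
  assumes "card (I - supp v) \<le> card (I \<inter> supp v)" "card (supp v) \<le> n"
  shows "card (supp v \<union> I) \<le> 2*n"
proof -
  have "supp v \<union> I = supp v \<union> (I - supp v)" by blast
  moreover have "card (supp v \<union> (I - supp v)) = card (supp v) + card (I - supp v)"
    by (rule card_Un_disjoint) auto
  ultimately have "card (supp v \<union> I) = card (supp v) + card (I - supp v)" by simp
  moreover have "card (I \<inter> supp v) \<le> card (supp v)" by (rule card_mono) auto
  ultimately show ?thesis using assms by linarith
qed

lemma iteration:
  fixes \<Phi> :: "real^'d^'N" and v y :: "real^'d" and x r :: "real^'N" and I J J0 :: "'d set"
    and u :: "real^'d"
  assumes n2: "n \<ge> 2" and R: "RIC \<Phi> (2*n) (0.03 / sqrt (ln (real n)))"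
    and sv: "card (supp v) \<le> n" and xv: "x = \<Phi> *v v"
    and yI: "supp y \<subseteq> I" and rr: "r = x - \<Phi> *v y"
    and orth: "\<forall>z. supp z \<subseteq> I \<longrightarrow> inner r (\<Phi> *v z) = 0"
    and cI: "card (supp v \<union> I) \<le> 2*n"
    and u: "u = transpose \<Phi> *v r" and idf: "identify_ok n u J" and reg: "regularize_ok u J J0"
  shows "0.32 / sqrt (ln (real n)) * norm (restrict_vec v (supp v - I)) \<le> norm (restrict_vec u J0)"
    and "card (J0 - supp v) \<le> card (J0 \<inter> supp v)"
    and "J0 \<inter> I = {}"
proof -
  define L where "L = ln (real n)"
  define s where "s = sqrt L"
  define \<epsilon> where "\<epsilon> = 0.03 / s"
  have L: "L \<ge> 1/2" and s: "s \<ge> 7/10" and s2: "s^2 = L" and e0: "0 \<le> \<epsilon>" and e1: "\<epsilon> \<le> 3/70"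
    and Le: "L * \<epsilon>^2 = 9/10000"
    using eps_facts[OF n2] unfolding L_def s_def \<epsilon>_def by auto
  have R': "RIC \<Phi> (2*n) \<epsilon>" using R unfolding \<epsilon>_def s_def L_def .
  have eh: "\<epsilon> \<le> 1/2" using e1 by simp
  define S where "S = supp v - I"
  define V where "V = norm (restrict_vec v S)"
  define E where "E = (\<Sum>i\<in>J0. (u$i)^2)"
  have E0: "E \<ge> 0" unfolding E_def by (rule sum_nonneg) simp
  have nE: "(norm (restrict_vec u J0))^2 = E" unfolding E_def by (rule norm_restrict_sq)
  have V0: "V \<ge> 0" by (simp add: V_def)
  have c1: "(1-\<epsilon>)^2 * V \<le> norm (restrict_vec u S)"
    using core(1)[OF R' e0 eh sv xv yI rr orth cI] unfolding V_def S_def u .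
  have cS: "card S \<le> n" using sv card_mono[of "supp v" S] by (auto simp: S_def)
  have JJ: "J \<subseteq> supp u" "card J \<le> n" using identify_props[OF idf] by auto
  have US: "(norm (restrict_vec u S))^2 \<le> (\<Sum>i\<in>J. (u$i)^2)"
    using identify_energy[OF idf cS] by (simp add: norm_restrict_sq)
  obtain K where K: "n \<le> 2^K" "real K \<le> 2 * L + 1" using choose_K[of n] n2 unfolding L_def by auto
  have JE: "(\<Sum>i\<in>J. (u$i)^2) \<le> (real K + 1) * E" unfolding E_def by (rule regularize_energy[OF reg JJ(2) K(1)])
  have KE: "(real K + 1) * E \<le> (2 * L + 2) * E" using K(2) E0 by (intro mult_right_mono) auto
  have ee: "1 - \<epsilon> \<ge> 67/70" using e1 by simp
  have "((1-\<epsilon>)^2 * V)^2 \<le> (norm (restrict_vec u S))^2"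
    using c1 by (rule power_mono) (use e0 V0 in simp)
  then have cV: "(1-\<epsilon>)^4 * V^2 \<le> 2 * (L * E) + 2 * E"
    using US JE KE by (simp add: power_mult_distrib algebra_simps flip: power_mult)
  have c08: "(1-\<epsilon>)^4 \<ge> 8/10"
  proof -
    have "(67/70::real)^4 \<le> (1-\<epsilon>)^4" using ee by (rule power_mono) simp
    moreover have "(8/10::real) \<le> (67/70)^4" by (simp add: power_divide)
    ultimately show ?thesis by linarith
  qed
  have "(8/10) * V^2 \<le> (1-\<epsilon>)^4 * V^2" using c08 by (rule mult_right_mono) simp
  moreover have "L * E \<ge> (1/2) * E" using L E0 by (rule mult_right_mono)
  ultimately have key: "(1024/10000) * V^2 \<le> L * E" using cV E0 by linarith
  have Lpos: "L > 0" using L by simp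
  show A: "0.32 / sqrt (ln (real n)) * norm (restrict_vec v (supp v - I)) \<le> norm (restrict_vec u J0)"
  proof -
    have "(0.32 / s * V)^2 = 0.1024 / L * V^2" using s2 by (simp add: power_mult_distrib power_divide)
    also have "\<dots> \<le> E" using key Lpos by (simp add: divide_le_eq field_simps)
    finally have "(0.32 / s * V)^2 \<le> (norm (restrict_vec u J0))^2" using nE by simp
    then have "0.32 / s * V \<le> norm (restrict_vec u J0)" by (rule power2_le_imp_le) simp
    then show ?thesis unfolding s_def L_def V_def S_def .
  qed
  have uI: "u$i = 0" if "i \<in> I" for i using u_zero[OF orth that] u by simp
  have J0J: "J0 \<subseteq> J" using reg unfolding regularize_ok_def by blast
  show "J0 \<inter> I = {}"
  proof (rule ccontr)
    assume "J0 \<inter> I \<noteq> {}"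
    then obtain i where "i \<in> J0" "i \<in> I" by blast
    then have "i \<in> supp u" "u$i = 0" using J0J JJ uI by auto
    then show False by (simp add: supp_def)
  qed
  show "card (J0 - supp v) \<le> card (J0 \<inter> supp v)"
  proof (rule ccontr)
    assume neg: "\<not> card (J0 - supp v) \<le> card (J0 \<inter> supp v)"
    define \<Lambda> where "\<Lambda> = J0 - supp v"
    have LJ: "\<Lambda> \<subseteq> J0" by (auto simp: \<Lambda>_def)
    have "J0 - \<Lambda> = J0 \<inter> supp v" by (auto simp: \<Lambda>_def)
    then have cc: "card (J0 - \<Lambda>) < card \<Lambda>" using neg by (simp add: \<Lambda>_def)
    have comp: "comparable u J0" using reg unfolding regularize_ok_def by blast
    define Bn where "Bn = norm (restrict_vec u \<Lambda>)"
    have E5: "E \<le> 5 * Bn^2" using comparable_split[OF comp LJ cc] unfolding E_def Bn_def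
      by (simp add: norm_restrict_sq)
    have L1: "\<Lambda> \<inter> supp v = {}" by (auto simp: \<Lambda>_def)
    have "\<Lambda> \<subseteq> J" using LJ J0J by blast
    then have "card \<Lambda> \<le> card J" by (simp add: card_mono)
    then have L2: "card \<Lambda> \<le> n" using JJ(2) by linarith
    have c2: "(1-\<epsilon>) * Bn \<le> 4*\<epsilon>*V"
      using core(2)[OF R' e0 eh sv xv yI rr orth cI L1 L2] unfolding Bn_def V_def S_def u .
    have "((1-\<epsilon>) * Bn)^2 \<le> (4*\<epsilon>*V)^2" using c2 by (rule power_mono) (use ee in \<open>simp add: Bn_def\<close>)
    then have "L * ((1-\<epsilon>)^2 * Bn^2) \<le> L * (16 * \<epsilon>^2 * V^2)"
      using Lpos by (simp add: power_mult_distrib)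
    also have "\<dots> = 16 * (L * \<epsilon>^2) * V^2" by (simp add: algebra_simps)
    finally have q1: "(1-\<epsilon>)^2 * (L * Bn^2) \<le> (144/10000) * V^2" using Le by (simp add: algebra_simps)
    have q09: "(1-\<epsilon>)^2 \<ge> 9/10"
    proof -
      have "(67/70::real)^2 \<le> (1-\<epsilon>)^2" using ee by (rule power_mono) simp
      moreover have "(9/10::real) \<le> (67/70)^2" by (simp add: power_divide)
      ultimately show ?thesis by linarith
    qed
    have Q0: "L * Bn^2 \<ge> 0" using Lpos by simp
    have "(9/10) * (L * Bn^2) \<le> (1-\<epsilon>)^2 * (L * Bn^2)" using q09 Q0 by (rule mult_right_mono)
    moreover have "L * E \<le> L * (5 * Bn^2)" using E5 Lpos by (simp add: mult_left_mono)
    ultimately have "L * Bn^2 \<le> 0" using q1 key by (simp add: algebra_simps)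
    then have "Bn^2 \<le> 0" using Lpos by (simp add: mult_le_0_iff)
    then have E00: "E \<le> 0" using E5 by linarith
    have "\<Lambda> \<noteq> {}" using cc by auto
    then obtain i where i: "i \<in> \<Lambda>" by blast
    then have "i \<in> supp u" using LJ J0J JJ by auto
    then have "(u$i)^2 > 0" by (simp add: supp_def)
    moreover have "(u$i)^2 \<le> E" unfolding E_def using i LJ by (intro member_le_sum) auto
    ultimately show False using E00 by linarith
  qed
qed



lemma invariant:
  fixes \<Phi> :: "real^'d^'N" and v :: "real^'d" and x r :: "real^'N" and I :: "'d set"
  assumes n2: "n \<ge> 2" and R: "RIC \<Phi> (2*n) (0.03 / sqrt (ln (real n)))"
    and sv: "card (supp v) \<le> n" and xv: "x = \<Phi> *v v"
    and st: "romp_state \<Phi> x n I r"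
  shows "\<exists>y. supp y \<subseteq> I \<and> r = x - \<Phi> *v y \<and> (\<forall>z. supp z \<subseteq> I \<longrightarrow> inner r (\<Phi> *v z) = 0)
           \<and> card (I - supp v) \<le> card (I \<inter> supp v)"
  using st
proof induction
  case init
  have "supp (0::real^'d) \<subseteq> {}" by (simp add: supp_def)
  moreover have "inner x (\<Phi> *v z) = 0" if "supp z \<subseteq> {}" for z
  proof -
    have "z = 0" using that by (auto simp: supp_def vec_eq_iff)
    then show ?thesis by simp
  qed
  ultimately show ?case by (intro exI[of _ 0]) auto
next
  case (step I r u J J0 y')
  from step.IH obtain y where y: "supp y \<subseteq> I" "r = x - \<Phi> *v y"
    "\<forall>z. supp z \<subseteq> I \<longrightarrow> inner r (\<Phi> *v z) = 0" "card (I - supp v) \<le> card (I \<inter> supp v)" by blast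
  have cI: "card (supp v \<union> I) \<le> 2*n" using card_cI[OF y(4) sv] .
  have it2: "card (J0 - supp v) \<le> card (J0 \<inter> supp v)" and it3: "J0 \<inter> I = {}"
    using iteration(2,3)[OF n2 R sv xv y(1,2,3) cI step.hyps(3,4,5)] by auto
  have ls: "lsq_ok \<Phi> x (I \<union> J0) y'" using step.hyps(6) .
  have s1: "supp y' \<subseteq> I \<union> J0" using ls unfolding lsq_ok_def by blast
  have o1: "\<forall>z. supp z \<subseteq> I \<union> J0 \<longrightarrow> inner (x - \<Phi> *v y') (\<Phi> *v z) = 0"
    using lsq_orth[OF ls] by blast
  have e1: "(I \<union> J0) - supp v = (I - supp v) \<union> (J0 - supp v)" by blast
  have e2: "(I \<union> J0) \<inter> supp v = (I \<inter> supp v) \<union> (J0 \<inter> supp v)" by blast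
  have c1: "card ((I \<union> J0) - supp v) = card (I - supp v) + card (J0 - supp v)"
    unfolding e1 by (rule card_Un_disjoint) (use it3 in auto)
  have c2: "card ((I \<union> J0) \<inter> supp v) = card (I \<inter> supp v) + card (J0 \<inter> supp v)"
    unfolding e2 by (rule card_Un_disjoint) (use it3 in auto)
  have "card ((I \<union> J0) - supp v) \<le> card ((I \<union> J0) \<inter> supp v)" using c1 c2 y(4) it2 by linarith
  then show ?case using s1 o1 by blast
qed

theorem lemma3p8:
  fixes \<Phi> :: "real^'d^'N" and v :: "real^'d" and x r :: "real^'N" and u :: "real^'d" and n :: nat
    and I J J0 :: "'d set"
  assumes "RIC \<Phi> (2 * n) (0.03 / sqrt (ln (real n)))"
    and "v \<noteq> 0" and "sparse n v" and "x = \<Phi> *v v"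
    and "romp_state \<Phi> x n I r" and "r \<noteq> 0"
    and "u = transpose \<Phi> *v r"
    and "identify_ok n u J" and "regularize_ok u J J0"
  shows "norm (restrict_vec u J0) \<ge>
           0.32 / sqrt (ln (real n)) * norm (restrict_vec v (supp v - I))"
proof -
  have sv: "card (supp v) \<le> n" using assms(3) unfolding sparse_def .
  consider "n = 0" | "n = 1" | "n \<ge> 2" by linarith
  then show ?thesis
  proof cases
    case 1
    then have "supp v = {}" using sv by simp
    then have "v = 0" by (auto simp: supp_def vec_eq_iff)
    then show ?thesis using assms(2) by simp
  next
    case 2
    then show ?thesis by simp
  next
    case 3
    obtain y where y: "supp y \<subseteq> I" "r = x - \<Phi> *v y"
      "\<forall>z. supp z \<subseteq> I \<longrightarrow> inner r (\<Phi> *v z) = 0" "card (I - supp v) \<le> card (I \<inter> supp v)"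
      using invariant[OF 3 assms(1) sv assms(4,5)] by blast
    have cI: "card (supp v \<union> I) \<le> 2*n" using card_cI[OF y(4) sv] .
    show ?thesis using iteration(1)[OF 3 assms(1) sv assms(4) y(1,2,3) cI assms(7,8,9)] by simp
  qed
qed


end
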